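(* Let $V$ be a finite set, $\mu_1,\mu_2$ probability measures on $V$ and $\rho$ a coupling between them. Then $\rho$ is economic if and only if the flow $\sum_{x,y\in V,\,x\neq y}\rho(x,y)Q_{(x,y)}$ on the complete digraph on $V$ (edges all pairs $(x,y)$ with $x\ne y$) is acyclic.
   Context: A coupling is a probability measure $\rho$ on $V\times V$ with marginals $\mu_1,\mu_2$. A path from $x$ to $y$ is any sequence $(x_0,\dots,x_n)$ of elements of $V$ with $x_0=x$, $x_n=y$, $x_i\neq x_{i+1}$ (no constraint other than the endpoints). For such $\gamma$, $Q_\gamma(u,v)=1$ if $(u,v)=(x_i,x_{i+1})$ for some $i$ and $0$ otherwise; $Q_{(x,y)}$ is this for the one-edge path. A flow is a nonnegative function $Q$ on ordered pairs of distinct elements; $E(Q)=\{(u,v):Q(u,v)>0\}$; $Q$ is acyclic if $(V,E(Q))$ has no directed cycle. The coupling $\rho$ is economic if for each pair $x\neq y$ there exist finitely many paths $\gamma^i_{(x,y)}$ from $x$ to $y$ and weights $\rho^i(x,y)\ge0$ with $\sum_i\rho^i(x,y)=\rho(x,y)$ such that the flow $\sum_{x\neq y}\sum_i\rho^i(x,y)Q_{\gamma^i_{(x,y)}}$ is acyclic. *)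

theory Defs
  imports Complex_Main
begin

definition prob_on :: "'a set \<Rightarrow> ('a \<Rightarrow> real) \<Rightarrow> bool" where
  "prob_on V \<mu> \<longleftrightarrow> (\<forall>x\<in>V. \<mu> x \<ge> 0) \<and> (\<Sum>x\<in>V. \<mu> x) = 1"

definition coupling :: "'a set \<Rightarrow> ('a \<Rightarrow> real) \<Rightarrow> ('a \<Rightarrow> real) \<Rightarrow> ('a \<Rightarrow> 'a \<Rightarrow> real) \<Rightarrow> bool" where
  "coupling V \<mu>1 \<mu>2 \<rho> \<longleftrightarrow>
     (\<forall>x\<in>V. \<forall>y\<in>V. \<rho> x y \<ge> 0) \<and>
     (\<forall>x\<in>V. (\<Sum>y\<in>V. \<rho> x y) = \<mu>1 x) \<and>
     (\<forall>y\<in>V. (\<Sum>x\<in>V. \<rho> x y) = \<mu>2 y)"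

definition is_path :: "'a set \<Rightarrow> 'a \<Rightarrow> 'a \<Rightarrow> 'a list \<Rightarrow> bool" where
  "is_path V x y \<gamma> \<longleftrightarrow> \<gamma> \<noteq> [] \<and> set \<gamma> \<subseteq> V \<and> hd \<gamma> = x \<and> last \<gamma> = y \<and>
     (\<forall>i. Suc i < length \<gamma> \<longrightarrow> \<gamma> ! i \<noteq> \<gamma> ! Suc i)"

definition Qpath :: "'a list \<Rightarrow> 'a \<Rightarrow> 'a \<Rightarrow> real" where
  "Qpath \<gamma> u v = (if \<exists>i. Suc i < length \<gamma> \<and> \<gamma> ! i = u \<and> \<gamma> ! Suc i = v then 1 else 0)"

definition flow_edges :: "'a set \<Rightarrow> ('a \<Rightarrow> 'a \<Rightarrow> real) \<Rightarrow> ('a \<times> 'a) set" where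
  "flow_edges V Q = {(u,v). u \<in> V \<and> v \<in> V \<and> u \<noteq> v \<and> Q u v > 0}"

definition acyclic_flow :: "'a set \<Rightarrow> ('a \<Rightarrow> 'a \<Rightarrow> real) \<Rightarrow> bool" where
  "acyclic_flow V Q \<longleftrightarrow> acyclic (flow_edges V Q)"

definition economic :: "'a set \<Rightarrow> ('a \<Rightarrow> 'a \<Rightarrow> real) \<Rightarrow> bool" where
  "economic V \<rho> \<longleftrightarrow>
     (\<exists>P :: 'a \<Rightarrow> 'a \<Rightarrow> ('a list \<times> real) list.
        (\<forall>x\<in>V. \<forall>y\<in>V. x \<noteq> y \<longrightarrow>
            (\<forall>(\<gamma>, w) \<in> set (P x y). is_path V x y \<gamma> \<and> w \<ge> 0) \<and>
            (\<Sum>(\<gamma>, w) \<leftarrow> P x y. w) = \<rho> x y) \<and>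
        acyclic_flow V (\<lambda>u v. \<Sum>x\<in>V. \<Sum>y\<in>V - {x}. \<Sum>(\<gamma>, w) \<leftarrow> P x y. w * Qpath \<gamma> u v))"

end

theory Submission
  imports Defs
begin

lemma le_sum_list_mem:
  fixes f :: "'b \<Rightarrow> real"
  assumes "z \<in> set xs" "\<forall>y\<in>set xs. 0 \<le> f y"
  shows "f z \<le> sum_list (map f xs)"
  using assms
proof (induction xs)
  case Nil then show ?case by simp
next
  case (Cons a xs)
  have "0 \<le> sum_list (map f xs)" using Cons.prems(2) by (intro sum_list_nonneg) auto
  moreover have "z \<in> set xs \<Longrightarrow> f z \<le> sum_list (map f xs)" using Cons by simp
  ultimately show ?case using Cons.prems by auto
qed

lemma path_rtrancl:
  assumes "\<forall>i. Suc i < length \<gamma> \<longrightarrow> (\<gamma>!i, \<gamma>!Suc i) \<in> E" "\<gamma> \<noteq> []"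
  shows "(hd \<gamma>, last \<gamma>) \<in> E\<^sup>*"
  using assms
proof (induction \<gamma>)
  case Nil then show ?case by simp
next
  case (Cons a xs)
  show ?case
  proof (cases "xs = []")
    case True then show ?thesis by simp
  next
    case False
    have "(a, hd xs) \<in> E" using Cons.prems(1)[rule_format, of 0] False
      by (simp add: hd_conv_nth)
    moreover have "(hd xs, last xs) \<in> E\<^sup>*"
    proof (rule Cons.IH[OF _ False], intro allI impI)
      fix i assume "Suc i < length xs"
      then show "(xs ! i, xs ! Suc i) \<in> E" using Cons.prems(1)[rule_format, of "Suc i"] by simp
    qed
    ultimately show ?thesis using False by simp
  qed
qed

theorem lemma3p1:
  fixes V :: "'a set" and \<mu>1 \<mu>2 :: "'a \<Rightarrow> real" and \<rho> :: "'a \<Rightarrow> 'a \<Rightarrow> real"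
  assumes "finite V"
    and "prob_on V \<mu>1" and "prob_on V \<mu>2"
    and "coupling V \<mu>1 \<mu>2 \<rho>"
  shows "economic V \<rho> \<longleftrightarrow>
         acyclic_flow V (\<lambda>u v. \<Sum>x\<in>V. \<Sum>y\<in>V - {x}. \<rho> x y * Qpath [x, y] u v)"
proof
  have rnn: "\<And>x y. x \<in> V \<Longrightarrow> y \<in> V \<Longrightarrow> \<rho> x y \<ge> 0" using assms(4) by (simp add: coupling_def)
  assume "economic V \<rho>"
  then obtain P :: "'a \<Rightarrow> 'a \<Rightarrow> ('a list \<times> real) list" where
    P1: "\<forall>x\<in>V. \<forall>y\<in>V. x \<noteq> y \<longrightarrow>
            (\<forall>(\<gamma>, w) \<in> set (P x y). is_path V x y \<gamma> \<and> w \<ge> 0) \<and>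
            (\<Sum>(\<gamma>, w) \<leftarrow> P x y. w) = \<rho> x y" and
    P2: "acyclic_flow V (\<lambda>u v. \<Sum>x\<in>V. \<Sum>y\<in>V - {x}. \<Sum>(\<gamma>, w) \<leftarrow> P x y. w * Qpath \<gamma> u v)"
    unfolding economic_def by blast
  define F where "F = (\<lambda>u v. \<Sum>x\<in>V. \<Sum>y\<in>V - {x}. \<Sum>(\<gamma>, w) \<leftarrow> P x y. w * Qpath \<gamma> u v)"
  define F0 where "F0 = (\<lambda>u v. \<Sum>x\<in>V. \<Sum>y\<in>V - {x}. \<rho> x y * Qpath [x, y] u v)"
  define E where "E = flow_edges V F"
  have acE: "acyclic E" using P2 by (simp add: acyclic_flow_def E_def F_def)
  have Qnn: "\<And>\<gamma> u v. 0 \<le> Qpath \<gamma> u v" by (simp add: Qpath_def)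
  have wnn: "\<And>x y g w. x \<in> V \<Longrightarrow> y \<in> V - {x} \<Longrightarrow> (g, w) \<in> set (P x y) \<Longrightarrow> 0 \<le> w"
  proof -
    fix x y g w assume a: "x \<in> V" "y \<in> V - {x}" "(g, w) \<in> set (P x y)"
    have "\<forall>(\<gamma>, w) \<in> set (P x y). is_path V x y \<gamma> \<and> w \<ge> 0"
    proof -
      have "y \<in> V" "x \<noteq> y" using a by auto
      then show ?thesis using P1 a(1) by blast
    qed
    then show "0 \<le> w" using a(3) by fastforce
  qed
  have termnn: "\<And>x y u v. x \<in> V \<Longrightarrow> y \<in> V - {x} \<Longrightarrow>
      \<forall>p\<in>set (P x y). 0 \<le> (case p of (\<gamma>, w) \<Rightarrow> w * Qpath \<gamma> u v)"
    using wnn Qnn by (smt (verit, best) case_prod_beta mult_nonneg_nonneg prod.collapse)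
  have innn: "\<And>x y a b. x \<in> V \<Longrightarrow> y \<in> V - {x} \<Longrightarrow> 0 \<le> (\<Sum>(\<gamma>, w) \<leftarrow> P x y. w * Qpath \<gamma> a b)"
  proof -
    fix x y a b assume "x \<in> V" "y \<in> V - {x}"
    from termnn[OF this, of a b] show "0 \<le> (\<Sum>(\<gamma>, w) \<leftarrow> P x y. w * Qpath \<gamma> a b)"
      by (intro sum_list_nonneg) auto
  qed
  have sub: "flow_edges V F0 \<subseteq> E\<^sup>+"
  proof
    fix p assume "p \<in> flow_edges V F0"
    then obtain u v where p: "p = (u,v)" "u \<in> V" "v \<in> V" "u \<noteq> v" "F0 u v > 0"
      by (auto simp: flow_edges_def)
    have "\<rho> u v > 0"
    proof (rule ccontr)
      assume nz: "\<not> \<rho> u v > 0"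
      have "F0 u v \<le> 0" unfolding F0_def
      proof (intro sum_nonpos)
        fix x y assume "x \<in> V" "y \<in> V - {x}"
        then show "\<rho> x y * Qpath [x, y] u v \<le> 0" using nz
          by (auto simp: Qpath_def nth_Cons split: nat.splits)
      qed
      then show False using p by simp
    qed
    have P1uv: "(\<forall>(\<gamma>, w) \<in> set (P u v). is_path V u v \<gamma> \<and> w \<ge> 0) \<and>
            (\<Sum>(\<gamma>, w) \<leftarrow> P u v. w) = \<rho> u v" using P1 p(2,3,4) by blast
    have pos: "0 < (\<Sum>(\<gamma>, w) \<leftarrow> P u v. w)" using P1uv \<open>\<rho> u v > 0\<close> by simp
    have "\<exists>q\<in>set (P u v). snd q > 0"
    proof (rule ccontr)
      assume "\<not> ?thesis"
      then have "\<forall>q\<in>set (P u v). snd q \<le> 0" by (simp add: not_less)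
      then have "(\<Sum>(\<gamma>, w) \<leftarrow> P u v. w) \<le> 0"
        by (intro sum_list_nonpos) (auto simp: case_prod_beta)
      then show False using pos by simp
    qed
    then obtain \<gamma> w where gw: "(\<gamma>, w) \<in> set (P u v)" "w > 0"
      by (metis prod.collapse)
    have ip: "is_path V u v \<gamma>" using P1uv gw(1) by blast
    have edges: "\<forall>i. Suc i < length \<gamma> \<longrightarrow> (\<gamma>!i, \<gamma>!Suc i) \<in> E"
    proof (intro allI impI)
      fix i assume i: "Suc i < length \<gamma>"
      let ?a = "\<gamma>!i" and ?b = "\<gamma>!Suc i"
      have ab: "?a \<in> V" "?b \<in> V" "?a \<noteq> ?b" using ip i unfolding is_path_def
        by (auto dest: nth_mem)
      have q: "Qpath \<gamma> ?a ?b = 1" using i by (auto simp: Qpath_def)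
      have "w = (case (\<gamma>, w) of (\<gamma>, w) \<Rightarrow> w * Qpath \<gamma> ?a ?b)" using q by simp
      also have "\<dots> \<le> (\<Sum>(\<gamma>, w) \<leftarrow> P u v. w * Qpath \<gamma> ?a ?b)"
        by (rule le_sum_list_mem[OF gw(1) termnn]) (use p in auto)
      also have "\<dots> \<le> (\<Sum>y\<in>V - {u}. \<Sum>(\<gamma>, w) \<leftarrow> P u y. w * Qpath \<gamma> ?a ?b)"
        by (rule member_le_sum[where f = "\<lambda>y. \<Sum>(\<gamma>, w) \<leftarrow> P u y. w * Qpath \<gamma> ?a ?b"])
           (use p assms(1) innn in auto)
      also have "\<dots> \<le> F ?a ?b" unfolding F_def
        by (rule member_le_sum[where f = "\<lambda>x. \<Sum>y\<in>V - {x}. \<Sum>(\<gamma>, w) \<leftarrow> P x y. w * Qpath \<gamma> ?a ?b"])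
           (use p assms(1) innn in \<open>auto intro!: sum_nonneg\<close>)
      finally have "F ?a ?b > 0" using gw by simp
      then show "(?a, ?b) \<in> E" using ab by (simp add: E_def flow_edges_def)
    qed
    have "(u, v) \<in> E\<^sup>*" using path_rtrancl[OF edges] ip by (simp add: is_path_def)
    then show "p \<in> E\<^sup>+" using p by (simp add: rtrancl_eq_or_trancl)
  qed
  have "acyclic (E\<^sup>+)" using acE by (simp add: acyclic_def)
  then have "acyclic (flow_edges V F0)" using sub acyclic_subset by blast
  then show "acyclic_flow V F0" by (simp add: acyclic_flow_def)
next
  have rnn: "\<And>x y. x \<in> V \<Longrightarrow> y \<in> V \<Longrightarrow> \<rho> x y \<ge> 0" using assms(4) by (simp add: coupling_def)
  assume H: "acyclic_flow V (\<lambda>u v. \<Sum>x\<in>V. \<Sum>y\<in>V - {x}. \<rho> x y * Qpath [x, y] u v)"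
  define P where "P = (\<lambda>x y::'a. [([x,y], \<rho> x y)])"
  show "economic V \<rho>" unfolding economic_def
  proof (intro exI[of _ P] conjI)
    show "\<forall>x\<in>V. \<forall>y\<in>V. x \<noteq> y \<longrightarrow>
            (\<forall>(\<gamma>, w) \<in> set (P x y). is_path V x y \<gamma> \<and> w \<ge> 0) \<and>
            (\<Sum>(\<gamma>, w) \<leftarrow> P x y. w) = \<rho> x y"
      using rnn by (auto simp: P_def is_path_def nth_Cons split: nat.splits)
  next
    show "acyclic_flow V (\<lambda>u v. \<Sum>x\<in>V. \<Sum>y\<in>V - {x}. \<Sum>(\<gamma>, w) \<leftarrow> P x y. w * Qpath \<gamma> u v)"
      using H by (simp add: P_def)
  qed
qed

end
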